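(* Let $n\ge1$ be an integer and $x\in\{0,1,\dots,n\}$ an observed value of $X\sim B(n,p)$. For $\alpha\in(0,1)$ let $g(\alpha)$ be the posterior mean of $p$ under the triangle prior with mode $\alpha$ (density $\frac{2}{\alpha}p$ on $(0,\alpha]$ and $\frac{2}{1-\alpha}(1-p)$ on $(\alpha,1)$): $$g(\alpha)=\frac{\frac{2}{\alpha}\int_0^\alpha p^{x+2}(1-p)^{n-x}\,dp+\frac{2}{1-\alpha}\int_\alpha^1 p^{x+1}(1-p)^{n-x+1}\,dp}{\frac{2}{\alpha}\int_0^\alpha p^{x+1}(1-p)^{n-x}\,dp+\frac{2}{1-\alpha}\int_\alpha^1 p^{x}(1-p)^{n-x+1}\,dp},$$ and let $\hat p_{IB}(x)$ denote the unique $\tau\in(0,1)$ with $g(\tau)=\tau$. Then: (1) $\hat p_{IB}(x)$ is the unique real zero in the interval $(0,1)$ of the integer-coefficient polynomial $$J_n(a,x)=2a^{x+2}\sum_{r=0}^{n-x}\binom{n+3}{n-x-r}\binom{x+r}{r}(-1)^r a^r-(n-x+1)(n+3)a+(n-x+1)(x+1).$$ (2) $\frac{x+1}{n+3}<\hat p_{IB}(x)<\frac{x+2}{n+3}$ for $x=0,1,\dots,n$; more precisely, $\frac{x+1}{n+2}<\hat p_{IB}(x)<\frac{x+2}{n+3}$ for $x<\frac n2$, and $\frac{x+1}{n+3}<\hat p_{IB}(x)<\frac{x+1}{n+2}$ for $x>\frac n2$.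
   Context: $B(n,p)$ is the binomial distribution with $n$ trials and success probability $p\in(0,1)$. The fixed point $\hat p_{IB}(x)$ of $g$ in $(0,1)$ (the "iterative Bayes estimate") exists and is unique. *)

theory Defs
  imports "HOL-Analysis.Analysis"
begin

definition g_tri :: "nat \<Rightarrow> nat \<Rightarrow> real \<Rightarrow> real" where
  "g_tri n x \<alpha> =
    ((2 / \<alpha>) * integral {0..\<alpha>} (\<lambda>p. p ^ (x + 2) * (1 - p) ^ (n - x))
      + (2 / (1 - \<alpha>)) * integral {\<alpha>..1} (\<lambda>p. p ^ (x + 1) * (1 - p) ^ (n - x + 1)))
    / ((2 / \<alpha>) * integral {0..\<alpha>} (\<lambda>p. p ^ (x + 1) * (1 - p) ^ (n - x))
      + (2 / (1 - \<alpha>)) * integral {\<alpha>..1} (\<lambda>p. p ^ x * (1 - p) ^ (n - x + 1)))"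

definition p_IB :: "nat \<Rightarrow> nat \<Rightarrow> real" where
  "p_IB n x = (THE \<tau>. \<tau> \<in> {0<..<1} \<and> g_tri n x \<tau> = \<tau>)"

definition J_poly :: "nat \<Rightarrow> nat \<Rightarrow> real \<Rightarrow> real" where
  "J_poly n x a =
     2 * a ^ (x + 2) * (\<Sum>r = 0..n - x. real ((n + 3) choose (n - x - r)) * real ((x + r) choose r)
                                          * (-1) ^ r * a ^ r)
     - real (n - x + 1) * real (n + 3) * a + real (n - x + 1) * real (x + 1)"

end

theory Submission
  imports Defs
begin


lemma beta_nat:
  "((\<lambda>p::real. p ^ a * (1 - p) ^ b) has_integral (fact a * fact b / fact (a + b + 1))) {0..1}"
proof -
  have h: "((\<lambda>t. t powr (real (a+1) - 1) * (1 - t) powr (real (b+1) - 1)) has_integral Beta (real (a+1)) (real (b+1))) {0<..<1}"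
    using has_integral_Beta_real[of "real (a+1)" "real (b+1)"] by (simp add: has_integral_Icc_iff_Ioo)
  have B: "Beta (real (a+1)) (real (b+1)) = fact a * fact b / fact (a + b + 1)"
  proof -
    have "Gamma (real (a+1)) = fact a" using Gamma_fact[of a] by (simp add: add.commute)
    moreover have "Gamma (real (b+1)) = fact b" using Gamma_fact[of b] by (simp add: add.commute)
    moreover have "Gamma (real (a+1) + real (b+1)) = fact (a+b+1)"
      using Gamma_fact[of "a+b+1"] by (simp add: add.commute add.left_commute)
    ultimately show ?thesis by (simp add: Beta_def)
  qed
  have "((\<lambda>p::real. p ^ a * (1 - p) ^ b) has_integral Beta (real (a+1)) (real (b+1))) {0<..<1}"
    using h by (subst has_integral_cong[where g="\<lambda>t. t powr (real (a+1) - 1) * (1 - t) powr (real (b+1) - 1)"]) (auto simp: powr_realpow)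
  then show ?thesis using B by (simp add: has_integral_Icc_iff_Ioo)
qed


definition FF :: "nat \<Rightarrow> nat \<Rightarrow> real \<Rightarrow> real" where
 "FF x m \<alpha> = (1-\<alpha>)*(integral {0..\<alpha>} (\<lambda>p. p^(x+2)*(1-p)^m) - \<alpha>*integral {0..\<alpha>} (\<lambda>p. p^(x+1)*(1-p)^m))
   + \<alpha>*(integral {\<alpha>..1} (\<lambda>p. p^(x+1)*(1-p)^(m+1)) - \<alpha>*integral {\<alpha>..1} (\<lambda>p. p^x*(1-p)^(m+1)))"

lemma hi: fixes f :: "real \<Rightarrow> real"
  shows "continuous_on {a..b} f \<Longrightarrow> (f has_integral integral {a..b} f) {a..b}"
  by (rule integrable_integral, rule integrable_continuous_interval)

lemma int_pos:
  fixes f :: "real \<Rightarrow> real"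
  assumes "a < b" "continuous_on {a..b} f" "\<And>t. a < t \<Longrightarrow> t < b \<Longrightarrow> f t > 0"
  shows "integral {a..b} f > 0"
proof -
  let ?H = "\<lambda>u. integral {a..u} f"
  have "?H a < ?H b"
  proof (rule DERIV_pos_imp_increasing_open[OF assms(1)])
    fix t assume t: "a < t" "t < b"
    have "(?H has_real_derivative f t) (at t within {a..b})"
      using t assms by (intro integral_has_real_derivative) auto
    moreover have "at t within {a..b} = at t"
      using t by (intro at_within_interior) auto
    ultimately show "\<exists>y. DERIV ?H t :> y \<and> 0 < y" using assms(3) t by auto
  next
    show "continuous_on {a..b} ?H"
      by (intro indefinite_integral_continuous_1 integrable_continuous_interval assms(2))
  qed
  then show ?thesis by simp
qed

lemma g_iff:
  fixes x m :: nat and \<alpha> :: real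
  assumes "0 < \<alpha>" "\<alpha> < 1"
  shows "(((2 / \<alpha>) * integral {0..\<alpha>} (\<lambda>p. p ^ (x + 2) * (1 - p) ^ m)
      + (2 / (1 - \<alpha>)) * integral {\<alpha>..1} (\<lambda>p. p ^ (x + 1) * (1 - p) ^ (m + 1)))
    / ((2 / \<alpha>) * integral {0..\<alpha>} (\<lambda>p. p ^ (x + 1) * (1 - p) ^ m)
      + (2 / (1 - \<alpha>)) * integral {\<alpha>..1} (\<lambda>p. p ^ x * (1 - p) ^ (m + 1))) = \<alpha>)
   \<longleftrightarrow> FF x m \<alpha> = 0"
proof -
  define I1 where "I1 = integral {0..\<alpha>} (\<lambda>p. p ^ (x + 2) * (1 - p) ^ m)"
  define I2 where "I2 = integral {\<alpha>..1} (\<lambda>p. p ^ (x + 1) * (1 - p) ^ (m + 1))"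
  define I3 where "I3 = integral {0..\<alpha>} (\<lambda>p. p ^ (x + 1) * (1 - p) ^ m)"
  define I4 where "I4 = integral {\<alpha>..1} (\<lambda>p. p ^ x * (1 - p) ^ (m + 1))"
  have p3: "I3 > 0" unfolding I3_def using assms
    by (intro int_pos continuous_intros) auto
  have p4: "I4 > 0" unfolding I4_def using assms
    by (intro int_pos continuous_intros) auto
  have D: "(2 / \<alpha>) * I3 + (2 / (1 - \<alpha>)) * I4 > 0"
    using p3 p4 assms by (intro add_pos_pos mult_pos_pos) auto
  have FF: "FF x m \<alpha> = (1-\<alpha>)*(I1 - \<alpha>*I3) + \<alpha>*(I2 - \<alpha>*I4)"
    unfolding FF_def I1_def I2_def I3_def I4_def by simp
  have "((2 / \<alpha>) * I1 + (2 / (1 - \<alpha>)) * I2) / ((2 / \<alpha>) * I3 + (2 / (1 - \<alpha>)) * I4) = \<alpha>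
     \<longleftrightarrow> (2 / \<alpha>) * I1 + (2 / (1 - \<alpha>)) * I2 = \<alpha> * ((2 / \<alpha>) * I3 + (2 / (1 - \<alpha>)) * I4)"
    using D by (simp add: divide_eq_eq)
  also have "\<dots> \<longleftrightarrow> (1-\<alpha>)*(I1 - \<alpha>*I3) + \<alpha>*(I2 - \<alpha>*I4) = 0"
    using assms by (auto simp: field_simps)
  finally show ?thesis unfolding I1_def I2_def I3_def I4_def FF_def by simp
qed

lemma ftc:
  fixes V V' :: "real \<Rightarrow> real"
  assumes "a \<le> b" "\<And>p. (V has_real_derivative V' p) (at p)"
  shows "(V' has_integral (V b - V a)) {a..b}"
  using assms by (intro fundamental_theorem_of_calculus)
     (auto simp: has_real_derivative_iff_has_vector_derivative[symmetric] intro: has_field_derivative_at_within)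

lemma dv: "((\<lambda>p::real. p^(k+1)*(1-p)^(l+1)) has_real_derivative
   (real(k+1)*p^k*(1-p)^(l+1) - real(l+1)*p^(k+1)*(1-p)^l)) (at p)"
proof -
  have d1: "((\<lambda>p::real. p^(k+1)) has_real_derivative real(k+1)*p^k) (at p)"
    using DERIV_pow[of "k+1" p] by simp
  have d0: "((\<lambda>p::real. 1 - p) has_real_derivative -1) (at p)"
    using DERIV_diff[OF DERIV_const[of 1] DERIV_ident] by simp
  have d2: "((\<lambda>p::real. (1-p)^(l+1)) has_real_derivative real(l+1)*(1-p)^l*(-1)) (at p)"
    using DERIV_power[OF d0, of "l+1"] by simp
  show ?thesis using DERIV_mult[OF d1 d2] by (simp add: algebra_simps)
qed

lemma FF_alt:
  assumes "0 \<le> \<alpha>" "\<alpha> \<le> 1"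
  shows "FF x m \<alpha> = (1-\<alpha>)*integral {0..\<alpha>} (\<lambda>p. p^(x+1)*(1-p)^m*(p-\<alpha>))
     + \<alpha>*integral {\<alpha>..1} (\<lambda>p. p^x*(1-p)^(m+1)*(p-\<alpha>))"
proof -
  have e1: "integral {0..\<alpha>} (\<lambda>p. p^(x+1)*(1-p)^m*(p-\<alpha>)) =
     integral {0..\<alpha>} (\<lambda>p. p^(x+2)*(1-p)^m) - \<alpha>*integral {0..\<alpha>} (\<lambda>p. p^(x+1)*(1-p)^m)"
  proof -
    have "integral {0..\<alpha>} (\<lambda>p. p^(x+1)*(1-p)^m*(p-\<alpha>)) =
       integral {0..\<alpha>} (\<lambda>p. p^(x+2)*(1-p)^m - \<alpha>*(p^(x+1)*(1-p)^m))"
      by (rule integral_cong) (simp add: algebra_simps)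
    also have "\<dots> = integral {0..\<alpha>} (\<lambda>p. p^(x+2)*(1-p)^m) - integral {0..\<alpha>} (\<lambda>p. \<alpha>*(p^(x+1)*(1-p)^m))"
      by (intro integral_diff integrable_continuous_interval continuous_intros)
    finally show ?thesis by simp
  qed
  have e2: "integral {\<alpha>..1} (\<lambda>p. p^x*(1-p)^(m+1)*(p-\<alpha>)) =
     integral {\<alpha>..1} (\<lambda>p. p^(x+1)*(1-p)^(m+1)) - \<alpha>*integral {\<alpha>..1} (\<lambda>p. p^x*(1-p)^(m+1))"
  proof -
    have "integral {\<alpha>..1} (\<lambda>p. p^x*(1-p)^(m+1)*(p-\<alpha>)) =
       integral {\<alpha>..1} (\<lambda>p. p^(x+1)*(1-p)^(m+1) - \<alpha>*(p^x*(1-p)^(m+1)))"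
      by (rule integral_cong) (simp add: algebra_simps)
    also have "\<dots> = integral {\<alpha>..1} (\<lambda>p. p^(x+1)*(1-p)^(m+1)) - integral {\<alpha>..1} (\<lambda>p. \<alpha>*(p^x*(1-p)^(m+1)))"
      by (intro integral_diff integrable_continuous_interval continuous_intros)
    finally show ?thesis by simp
  qed
  show ?thesis unfolding FF_def e1 e2 ..
qed

lemma FF_L1:
  fixes x m :: nat
  defines "\<alpha> \<equiv> (real x + 1) / (real x + real m + 3)"
  shows "FF x m \<alpha> > 0"
proof -
  define N where "N = real x + real m + 3"
  have N: "N > 0" unfolding N_def by simp
  have a0: "0 < \<alpha>" and a1: "\<alpha> < 1" unfolding \<alpha>_def by (auto simp: field_simps)
  define v where "v = (\<lambda>p::real. p^(x+1)*(1-p)^(m+1+1))"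
  have hv: "((\<lambda>p. p^x*(1-p)^(m+1)*(p-\<alpha>)) has_integral (v c - v d)/N) {c..d}" if "c \<le> d" for c d
  proof -
    have "((\<lambda>p. p^x*(1-p)^(m+1)*(p-\<alpha>)) has_integral ((-1/N) * v d - (-1/N) * v c)) {c..d}"
    proof (rule ftc[OF that])
      fix p
      show "((\<lambda>p. (-1/N) * v p) has_real_derivative
        (p^x*(1-p)^(m+1)*(p-\<alpha>))) (at p)"
      proof -
        have e: "(1-p)^(m+1+1) = (1-p)^(m+1)*(1-p)" "p^(x+1) = p^x*p" by simp_all
        have "(-1/N)*(real(x+1)*p^x*(1-p)^(m+1+1) - real(m+1+1)*p^(x+1)*(1-p)^(m+1))
           = p^x*(1-p)^(m+1)*(p-\<alpha>)"
          unfolding e \<alpha>_def using N unfolding N_def by (simp add: field_simps)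
        moreover have "((\<lambda>p. (-1/N) * v p) has_real_derivative
            (-1/N)*(real(x+1)*p^x*(1-p)^(m+1+1) - real(m+1+1)*p^(x+1)*(1-p)^(m+1))) (at p)"
          unfolding v_def by (intro DERIV_cmult dv)
        ultimately show ?thesis by simp
      qed
    qed
    moreover have "(-1/N) * v d - (-1/N) * v c = (v c - v d)/N" using N by (simp add: field_simps)
    ultimately show ?thesis by simp
  qed
  have v1: "v 1 = 0" "v 0 = 0" unfolding v_def by simp_all
  have hA: "((\<lambda>p. p^(x+1)*(1-p)^m*(p-\<alpha>)) has_integral integral {0..\<alpha>} (\<lambda>p. p^(x+1)*(1-p)^m*(p-\<alpha>))) {0..\<alpha>}"
    by (intro hi continuous_intros)
  have "((\<lambda>p. (1-\<alpha>)*(p^(x+1)*(1-p)^m*(p-\<alpha>)) - \<alpha>*(p^x*(1-p)^(m+1)*(p-\<alpha>))) has_integral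
     ((1-\<alpha>)*integral {0..\<alpha>} (\<lambda>p. p^(x+1)*(1-p)^m*(p-\<alpha>)) - \<alpha>*((v 0 - v \<alpha>)/N))) {0..\<alpha>}"
    using a0 by (intro has_integral_diff has_integral_mult_right hA hv) simp
  moreover have "FF x m \<alpha> = (1-\<alpha>)*integral {0..\<alpha>} (\<lambda>p. p^(x+1)*(1-p)^m*(p-\<alpha>)) - \<alpha>*((v 0 - v \<alpha>)/N)"
    using FF_alt[of \<alpha> x m] a0 a1 integral_unique[OF hv[of \<alpha> 1]] v1 by (simp add: field_simps)
  ultimately have "FF x m \<alpha> = integral {0..\<alpha>} (\<lambda>p. p^x*(1-p)^m*(p-\<alpha>)^2)"
    by (subst (asm) has_integral_cong[where g="\<lambda>p. p^x*(1-p)^m*(p-\<alpha>)^2"])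
       (auto simp: algebra_simps power2_eq_square dest: integral_unique)
  also have "\<dots> > 0" using a0 a1
    by (intro int_pos continuous_intros) auto
  finally show ?thesis .
qed

lemma FF_U:
  fixes x m :: nat
  defines "\<alpha> \<equiv> (real x + 2) / (real x + real m + 3)"
  shows "FF x m \<alpha> < 0"
proof -
  define N where "N = real x + real m + 3"
  have N: "N > 0" unfolding N_def by simp
  have a0: "0 < \<alpha>" and a1: "\<alpha> < 1" unfolding \<alpha>_def by (auto simp: field_simps)
  define v where "v = (\<lambda>p::real. p^(x+1+1)*(1-p)^(m+1))"
  have hv: "((\<lambda>p. p^(x+1)*(1-p)^m*(p-\<alpha>)) has_integral (v c - v d)/N) {c..d}" if "c \<le> d" for c d
  proof -
    have "((\<lambda>p. p^(x+1)*(1-p)^m*(p-\<alpha>)) has_integral ((-1/N) * v d - (-1/N) * v c)) {c..d}"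
    proof (rule ftc[OF that])
      fix p
      show "((\<lambda>p. (-1/N) * v p) has_real_derivative
        (p^(x+1)*(1-p)^m*(p-\<alpha>))) (at p)"
      proof -
        have e: "(1-p)^(m+1) = (1-p)^m*(1-p)" "p^(x+1+1) = p^(x+1)*p" by simp_all
        have "(-1/N)*(real(x+1+1)*p^(x+1)*(1-p)^(m+1) - real(m+1)*p^(x+1+1)*(1-p)^m)
           = p^(x+1)*(1-p)^m*(p-\<alpha>)"
          unfolding e \<alpha>_def using N unfolding N_def by (simp add: field_simps)
        moreover have "((\<lambda>p. (-1/N) * v p) has_real_derivative
            (-1/N)*(real(x+1+1)*p^(x+1)*(1-p)^(m+1) - real(m+1)*p^(x+1+1)*(1-p)^m)) (at p)"
          unfolding v_def by (intro DERIV_cmult dv)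
        ultimately show ?thesis by simp
      qed
    qed
    moreover have "(-1/N) * v d - (-1/N) * v c = (v c - v d)/N" using N by (simp add: field_simps)
    ultimately show ?thesis by simp
  qed
  have v1: "v 1 = 0" "v 0 = 0" unfolding v_def by simp_all
  have hB: "((\<lambda>p. p^x*(1-p)^(m+1)*(p-\<alpha>)) has_integral integral {\<alpha>..1} (\<lambda>p. p^x*(1-p)^(m+1)*(p-\<alpha>))) {\<alpha>..1}"
    by (intro hi continuous_intros)
  have "((\<lambda>p. \<alpha>*(p^x*(1-p)^(m+1)*(p-\<alpha>)) - (1-\<alpha>)*(p^(x+1)*(1-p)^m*(p-\<alpha>))) has_integral
     (\<alpha>*integral {\<alpha>..1} (\<lambda>p. p^x*(1-p)^(m+1)*(p-\<alpha>)) - (1-\<alpha>)*((v \<alpha> - v 1)/N))) {\<alpha>..1}"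
    using a1 by (intro has_integral_diff has_integral_mult_right hB hv) simp
  moreover have "FF x m \<alpha> = \<alpha>*integral {\<alpha>..1} (\<lambda>p. p^x*(1-p)^(m+1)*(p-\<alpha>)) - (1-\<alpha>)*((v \<alpha> - v 1)/N)"
  proof -
    have "FF x m \<alpha> = (1-\<alpha>)*((v 0 - v \<alpha>)/N) + \<alpha>*integral {\<alpha>..1} (\<lambda>p. p^x*(1-p)^(m+1)*(p-\<alpha>))"
      using FF_alt[of \<alpha> x m] a0 a1 integral_unique[OF hv[of 0 \<alpha>]] by simp
    then show ?thesis using v1 by (simp add: algebra_simps)
  qed
  ultimately have "FF x m \<alpha> = integral {\<alpha>..1} (\<lambda>p. - (p^x*(1-p)^m*(p-\<alpha>)^2))"
    by (subst (asm) has_integral_cong[where g="\<lambda>p. - (p^x*(1-p)^m*(p-\<alpha>)^2)"])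
       (auto simp: algebra_simps power2_eq_square dest: integral_unique)
  also have "\<dots> = - integral {\<alpha>..1} (\<lambda>p. p^x*(1-p)^m*(p-\<alpha>)^2)"
    by (rule integral_neg)
  also have "\<dots> < 0" using a0 a1
    by (simp, intro int_pos continuous_intros) auto
  finally show ?thesis .
qed



lemma FF_M_expr:
  fixes x m :: nat
  defines "\<alpha> \<equiv> (real x + 1) / (real x + real m + 2)"
  shows "FF x m \<alpha> = ((1-\<alpha>)*integral {0..\<alpha>} (\<lambda>p. p^(x+1)*(1-p)^(m+1))
      - \<alpha>*integral {\<alpha>..1} (\<lambda>p. p^(x+1)*(1-p)^(m+1))) / (real x + real m + 2)"
proof -
  define N where "N = real x + real m + 2"
  have N: "N > 0" unfolding N_def by simp
  have a0: "0 < \<alpha>" and a1: "\<alpha> < 1" unfolding \<alpha>_def by (auto simp: field_simps)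
  define v where "v = (\<lambda>p::real. p^(x+1)*(1-p)^(m+1))"
  define v' where "v' = (\<lambda>p::real. real(x+1)*p^x*(1-p)^(m+1) - real(m+1)*p^(x+1)*(1-p)^m)"
  have dv': "(v has_real_derivative v' p) (at p)" for p unfolding v_def v'_def by (rule dv)
  have keq: "v' p = - N * (p^x*(1-p)^m*(p-\<alpha>))" for p
  proof -
    have e: "(1-p)^(m+1) = (1-p)^m*(1-p)" "p^(x+1) = p^x*p" by simp_all
    show ?thesis unfolding v'_def e \<alpha>_def using N unfolding N_def by (simp add: field_simps)
  qed
  define V0 where "V0 = integral {0..\<alpha>} v"
  define V1 where "V1 = integral {\<alpha>..1} v"
  have hv0: "(v has_integral V0) {0..\<alpha>}" unfolding V0_def v_def by (intro hi continuous_intros)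
  have hv1: "(v has_integral V1) {\<alpha>..1}" unfolding V1_def v_def by (intro hi continuous_intros)
  have hP: "((\<lambda>p. 1 * v p + v' p * p) has_integral (\<alpha> * v \<alpha> - 0 * v 0)) {0..\<alpha>}"
    using a0 by (intro ftc[where V="\<lambda>p. p * v p"] DERIV_mult DERIV_ident dv') simp
  have hQ: "((\<lambda>p. (-1) * v p + v' p * (1-p)) has_integral ((1-1) * v 1 - (1-\<alpha>) * v \<alpha>)) {\<alpha>..1}"
  proof (intro ftc[where V="\<lambda>p. (1-p) * v p"] DERIV_mult dv')
    show "\<alpha> \<le> 1" using a1 by simp
    fix p :: real show "((\<lambda>p. 1 - p) has_real_derivative -1) (at p)"
      using DERIV_diff[OF DERIV_const[of 1] DERIV_ident] by simp
  qed
  have i3: "((\<lambda>p. p^(x+1)*(1-p)^m*(p-\<alpha>)) has_integral (1/N) * (V0 - (\<alpha> * v \<alpha> - 0 * v 0))) {0..\<alpha>}"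
  proof -
    have "((\<lambda>p. (1/N) * (v p - (1 * v p + v' p * p))) has_integral (1/N) * (V0 - (\<alpha> * v \<alpha> - 0 * v 0))) {0..\<alpha>}"
      by (intro has_integral_mult_right has_integral_diff hv0 hP)
    moreover have "(1/N) * (v p - (1 * v p + v' p * p)) = p^(x+1)*(1-p)^m*(p-\<alpha>)" for p
      unfolding keq using N by (simp add: field_simps)
    ultimately show ?thesis by simp
  qed
  have i4: "((\<lambda>p. p^x*(1-p)^(m+1)*(p-\<alpha>)) has_integral (-1/N) * (((1-1) * v 1 - (1-\<alpha>) * v \<alpha>) + V1)) {\<alpha>..1}"
  proof -
    have "((\<lambda>p. (-1/N) * (((-1) * v p + v' p * (1-p)) + v p)) has_integral (-1/N) * (((1-1) * v 1 - (1-\<alpha>) * v \<alpha>) + V1)) {\<alpha>..1}"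
      by (intro has_integral_mult_right has_integral_add hv1 hQ)
    moreover have "(-1/N) * (((-1) * v p + v' p * (1-p)) + v p) = p^x*(1-p)^(m+1)*(p-\<alpha>)" for p
      unfolding keq using N by (simp add: field_simps)
    ultimately show ?thesis by simp
  qed
  have "FF x m \<alpha> = (1-\<alpha>)*((1/N) * (V0 - (\<alpha> * v \<alpha> - 0 * v 0))) + \<alpha>*((-1/N) * (((1-1) * v 1 - (1-\<alpha>) * v \<alpha>) + V1))"
    using FF_alt[of \<alpha> x m] a0 a1 integral_unique[OF i3] integral_unique[OF i4] by simp
  also have "\<dots> = ((1-\<alpha>)*V0 - \<alpha>*V1)/N" using N by (simp add: field_simps)
  finally show ?thesis unfolding V0_def V1_def v_def N_def .
qed



lemma aux_pos: fixes a b u P Q :: real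
  assumes "u>0" "P>0" "Q>0" "P - Q = (b-a)*u" "a*b*u^2 < P*Q" "a<b"
  shows "a*(-1/u) + b*(a/P) - b*(-1/u) - a*(b/Q) > 0"
proof -
  have e1: "a*(-1/u) + b*(a/P) - b*(-1/u) - a*(b/Q) = (b-a)/u - a*b*(P-Q)/(P*Q)"
    using assms by (simp add: field_simps)
  have e2: "(b-a)/u - a*b*(P-Q)/(P*Q) = (b-a)*(P*Q - a*b*u^2)/(u*P*Q)"
    unfolding assms(4) using assms by (simp add: field_simps power2_eq_square)
  show ?thesis unfolding e1 e2 using assms by (intro divide_pos_pos mult_pos_pos) auto
qed
lemma key_ineq:
  fixes a b :: nat and s :: real
  assumes ab: "a < b" "0 < a" and s: "0 < s" "s < 1"
  shows "(real b)^b * (1-s)^b * (real a + real b * s)^a < (real a)^a * (1-s)^a * (real b + real a * s)^b"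
proof -
  define d where "d = (\<lambda>t::real. real a * ln (1-t) + real b * ln (real b + real a * t)
      - real b * ln (1-t) - real a * ln (real a + real b * t))"
  have A: "real a > 0" "real b > 0" "real a < real b" using ab by auto
  have "d 0 < d s"
  proof (rule DERIV_pos_imp_increasing_open[OF s(1)])
    fix t assume t: "0 < t" "t < s"
    then have t1: "t < 1" using s by simp
    have p1: "real b + real a * t > 0" "real a + real b * t > 0" "1 - t > 0" using A t t1 by (auto intro: add_pos_nonneg)
    have "(d has_real_derivative
       (real a * (-1/(1-t)) + real b * (real a/(real b + real a * t)) - real b * (-1/(1-t))
          - real a * (real b/(real a + real b * t)))) (at t)"
    proof -
      have l1: "((\<lambda>t. ln (1-t)) has_real_derivative (-1/(1-t))) (at t)"
        using p1 by (auto intro!: derivative_eq_intros)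
      have l2: "((\<lambda>t. ln (real b + real a * t)) has_real_derivative (real a/(real b + real a * t))) (at t)"
        using p1 by (auto intro!: derivative_eq_intros)
      have l3: "((\<lambda>t. ln (real a + real b * t)) has_real_derivative (real b/(real a + real b * t))) (at t)"
        using p1 by (auto intro!: derivative_eq_intros)
      show ?thesis unfolding d_def
        by (intro DERIV_diff DERIV_add DERIV_cmult l1 l2 l3 DERIV_const)
    qed
    moreover have "real a * (-1/(1-t)) + real b * (real a/(real b + real a * t)) - real b * (-1/(1-t))
          - real a * (real b/(real a + real b * t)) > 0"
    proof (rule aux_pos)
      show "real a * real b * (1-t)^2 < (real b + real a * t) * (real a + real b * t)"
      proof -
        have "real a * real b * (1-t)^2 < real a * real b"
        proof -
          have "(1-t)*(1-t) < 1*1" using t t1 by (intro mult_strict_mono) auto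
          then have "(1-t)^2 < 1" by (simp add: power2_eq_square)
          moreover have "real a * real b > 0" using A by simp
          ultimately show ?thesis using mult_strict_left_mono[of "(1-t)^2" 1 "real a * real b"] by simp
        qed
        moreover have "real a * real b \<le> (real b + real a * t) * (real a + real b * t)"
          using A t by (simp add: algebra_simps)
        ultimately show ?thesis by linarith
      qed
    qed (use p1 A in \<open>auto simp: algebra_simps\<close>)
    ultimately show "\<exists>y. DERIV d t :> y \<and> 0 < y" by blast
  next
    have "\<forall>t\<in>{0..s}. isCont d t"
    proof
      fix t assume "t \<in> {0..s}"
      then have "real b + real a * t > 0" "real a + real b * t > 0" "1 - t > 0" using A s by (auto intro: add_pos_nonneg)
      then show "isCont d t" unfolding d_def using A by (intro continuous_intros) auto
    qed
    then show "continuous_on {0..s} d" by (simp add: continuous_at_imp_continuous_on)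
  qed
  moreover have "d 0 = real b * ln (real b) - real a * ln (real a)" unfolding d_def by simp
  ultimately have ds: "d s > real b * ln (real b) - real a * ln (real a)" by simp
  have p1: "real b + real a * s > 0" "real a + real b * s > 0" "1 - s > 0" using A s by (auto intro: add_pos_nonneg)
  have "ln ((real b)^b * (1-s)^b * (real a + real b * s)^a) < ln ((real a)^a * (1-s)^a * (real b + real a * s)^b)"
    using ds A p1 unfolding d_def by (simp add: ln_mult ln_realpow)
  then show ?thesis using A p1 by simp
qed


lemma T_deriv:
  fixes f :: "real \<Rightarrow> real"
  assumes "continuous_on {0..1} f" "0 < t" "t < 1"
  shows "((\<lambda>u. integral {0..u} f) has_real_derivative f t) (at t)"
proof -
  have "((\<lambda>u. integral {0..u} f) has_real_derivative f t) (at t within {0..1})"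
    using assms by (intro integral_has_real_derivative) auto
  moreover have "at t within {0..1} = at t" using assms by (intro at_within_interior) auto
  ultimately show ?thesis by simp
qed

lemma mono_split:
  fixes f :: "real \<Rightarrow> real" and c \<alpha> :: real
  assumes a: "0 < \<alpha>" "\<alpha> < 1" and f: "continuous_on {0..1} f"
    and pos: "\<And>s. 0 < s \<Longrightarrow> s < 1 \<Longrightarrow> c * (f (\<alpha>*(1-s)) - f (\<alpha>+(1-\<alpha>) * s)) > 0"
  shows "c * ((1-\<alpha>)*integral {0..\<alpha>} f - \<alpha>*integral {\<alpha>..1} f) > 0"
proof -
  define T where "T = (\<lambda>u. integral {0..u} f)"
  define H where "H = (\<lambda>s. c * ((1-\<alpha>)*(T \<alpha> - T (\<alpha>*(1-s))) - \<alpha>*(T (\<alpha>+(1-\<alpha>) * s) - T \<alpha>)))"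
  have key: "\<exists>y. DERIV H s :> y \<and> 0 < y" if s: "0 < s" "s < 1" for s :: real
  proof -
    have as: "\<alpha>* s > 0" "(1-\<alpha>)* s > 0" "(1-\<alpha>)* s < 1-\<alpha>" using a s by (auto simp: mult_pos_pos)
    have i1: "0 < \<alpha>*(1-s)" "\<alpha>*(1-s) < 1" using a s as by (auto simp: algebra_simps)
    have i2: "0 < \<alpha>+(1-\<alpha>) * s" "\<alpha>+(1-\<alpha>) * s < 1" using a as by linarith+
    have dg1: "((\<lambda>s. \<alpha>*(1-s)) has_real_derivative \<alpha> * (0 - 1)) (at s)"
      by (auto intro!: derivative_eq_intros)
    have dg2: "((\<lambda>s. \<alpha>+(1-\<alpha>) * s) has_real_derivative (1-\<alpha>)) (at s)"
      by (auto intro!: derivative_eq_intros)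
    have d1: "((\<lambda>s. T (\<alpha>*(1-s))) has_real_derivative f (\<alpha>*(1-s)) * (\<alpha> * (0 - 1))) (at s)"
      unfolding T_def using DERIV_chain2[of _ _ "\<lambda>s. \<alpha>*(1-s)" s, OF T_deriv[OF f i1] dg1] by simp
    have d2: "((\<lambda>s. T (\<alpha>+(1-\<alpha>) * s)) has_real_derivative f (\<alpha>+(1-\<alpha>) * s) * (1-\<alpha>)) (at s)"
      unfolding T_def using DERIV_chain2[of _ _ "\<lambda>s. \<alpha>+(1-\<alpha>) * s" s, OF T_deriv[OF f i2] dg2] by simp
    have hd: "(H has_real_derivative c * ((1-\<alpha>)*(0 - f (\<alpha>*(1-s)) * (\<alpha> * (0 - 1))) - \<alpha>*(f (\<alpha>+(1-\<alpha>) * s) * (1-\<alpha>) - 0))) (at s)"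
      unfolding H_def by (intro DERIV_cmult DERIV_diff DERIV_const d1 d2)
    have eq: "c * ((1-\<alpha>)*(0 - f (\<alpha>*(1-s)) * (\<alpha> * (0 - 1))) - \<alpha>*(f (\<alpha>+(1-\<alpha>) * s) * (1-\<alpha>) - 0))
       = (\<alpha>*(1-\<alpha>)) * (c * (f (\<alpha>*(1-s)) - f (\<alpha>+(1-\<alpha>) * s)))" by (simp add: algebra_simps)
    have ps: "(\<alpha>*(1-\<alpha>)) * (c * (f (\<alpha>*(1-s)) - f (\<alpha>+(1-\<alpha>) * s))) > 0"
      using pos[OF s] a by simp
    have ps2: "0 < c * ((1-\<alpha>)*(0 - f (\<alpha>*(1-s)) * (\<alpha> * (0 - 1))) - \<alpha>*(f (\<alpha>+(1-\<alpha>) * s) * (1-\<alpha>) - 0))"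
      using ps eq by linarith
    show "\<exists>y. DERIV H s :> y \<and> 0 < y" using hd ps2 by blast
  qed
  have cont: "continuous_on {0..1} H"
  proof -
    have cT: "continuous_on {0..1} T" unfolding T_def
      by (intro indefinite_integral_continuous_1 integrable_continuous_interval f)
    have im1: "(\<lambda>s. \<alpha>*(1-s)) ` {0..1} \<subseteq> {0..1}"
    proof clarify
      fix s :: real assume s: "s \<in> {0..1}"
      have h: "\<alpha>* s \<ge> 0" using a s by simp
      have e: "\<alpha>*(1-s) = \<alpha> - \<alpha>* s" by (simp add: algebra_simps)
      have "\<alpha>* s \<le> \<alpha> * 1" using a s by (intro mult_left_mono) auto
      then show "\<alpha>*(1-s) \<in> {0..1}" using a h unfolding e by auto
    qed
    have im2: "(\<lambda>s. \<alpha>+(1-\<alpha>) * s) ` {0..1} \<subseteq> {0..1}"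
    proof clarify
      fix s :: real assume s: "s \<in> {0..1}"
      have h1: "(1-\<alpha>)* s \<ge> 0" using a s by simp
      have h2: "(1-\<alpha>)* s \<le> 1-\<alpha>" using mult_left_mono[of s 1 "1-\<alpha>"] a s by simp
      have "0 \<le> \<alpha>+(1-\<alpha>) * s" "\<alpha>+(1-\<alpha>) * s \<le> 1" using a h1 h2 by linarith+
      then show "\<alpha>+(1-\<alpha>) * s \<in> {0..1}" by simp
    qed
    have c1: "continuous_on {0..1} (\<lambda>s. T (\<alpha>*(1-s)))"
      by (rule continuous_on_compose2[OF cT _ im1]) (intro continuous_intros)
    have c2: "continuous_on {0..1} (\<lambda>s. T (\<alpha>+(1-\<alpha>) * s))"
      by (rule continuous_on_compose2[OF cT _ im2]) (intro continuous_intros)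
    show "continuous_on {0..1} H" unfolding H_def
      by (intro continuous_intros c1 c2)
  qed
  have "H 0 < H 1" by (rule DERIV_pos_imp_increasing_open[OF _ key cont]) auto
  have comb: "integral {\<alpha>..1} f = T 1 - T \<alpha>"
    unfolding T_def using Henstock_Kurzweil_Integration.integral_combine[where a=0 and c=\<alpha> and b=1 and f=f] a
    by (simp add: integrable_continuous_interval f)
  have "H 0 = 0" unfolding H_def by simp
  moreover have "H 1 = c * ((1-\<alpha>)*integral {0..\<alpha>} f - \<alpha>*integral {\<alpha>..1} f)"
    unfolding H_def comb by (simp add: T_def)
  ultimately show ?thesis using \<open>H 0 < H 1\<close> by simp
qed


lemma v_vals:
  fixes a b :: nat and s :: real
  assumes "0 < a" "0 < b"
  defines "N \<equiv> real a + real b"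
  defines "\<alpha> \<equiv> real a / N"
  shows "(\<alpha>*(1-s))^a*(1-\<alpha>*(1-s))^b = (real a)^a*(1-s)^a*(real b + real a * s)^b / N^(a+b)"
    and "(\<alpha>+(1-\<alpha>) * s)^a*(1-(\<alpha>+(1-\<alpha>) * s))^b = (real a + real b * s)^a * (real b)^b*(1-s)^b / N^(a+b)"
proof -
  have N: "N > 0" unfolding N_def using assms by simp
  have e1: "\<alpha>*(1-s) = (real a * (1-s)) / N" unfolding \<alpha>_def by simp
  have e2: "1-\<alpha>*(1-s) = (real b + real a * s) / N" unfolding \<alpha>_def using N unfolding N_def by (simp add: field_simps)
  have e0: "1-\<alpha> = real b / N" unfolding \<alpha>_def using N unfolding N_def by (simp add: field_simps)
  have e3: "\<alpha>+(1-\<alpha>) * s = (real a + real b * s) / N" unfolding e0 unfolding \<alpha>_def by (simp add: add_divide_distrib)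
  have e4: "1-(\<alpha>+(1-\<alpha>) * s) = (real b * (1-s)) / N" unfolding e3 using N unfolding N_def by (simp add: field_simps)
  show "(\<alpha>*(1-s))^a*(1-\<alpha>*(1-s))^b = (real a)^a*(1-s)^a*(real b + real a * s)^b / N^(a+b)"
    unfolding e2 unfolding e1 by (simp add: power_divide power_mult_distrib power_add)
  show "(\<alpha>+(1-\<alpha>) * s)^a*(1-(\<alpha>+(1-\<alpha>) * s))^b = (real a + real b * s)^a * (real b)^b*(1-s)^b / N^(a+b)"
    unfolding e4 unfolding e3 by (simp add: power_divide power_mult_distrib power_add)
qed

lemma FF_M:
  fixes x m :: nat
  defines "\<alpha> \<equiv> (real x + 1) / (real x + real m + 2)"
  shows "x < m \<Longrightarrow> FF x m \<alpha> > 0" and "m < x \<Longrightarrow> FF x m \<alpha> < 0"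
proof -
  define N where "N = real (x+1) + real (m+1)"
  have N: "N > 0" unfolding N_def by simp
  have NN': "N = real x + real m + 2" unfolding N_def by simp
  have aN: "\<alpha> = real (x+1) / N" unfolding \<alpha>_def NN' by simp
  have a0: "0 < \<alpha>" and a1: "\<alpha> < 1" unfolding \<alpha>_def by (auto simp: field_simps)
  define v where "v = (\<lambda>p::real. p^(x+1)*(1-p)^(m+1))"
  have cv: "continuous_on {0..1} v" unfolding v_def by (intro continuous_intros)
  have vl: "v (\<alpha>*(1-s)) = (real (x+1))^(x+1)*(1-s)^(x+1)*(real (m+1) + real (x+1) * s)^(m+1) / N^((x+1)+(m+1))" for s
    unfolding v_def aN N_def by (rule v_vals) auto
  have vr: "v (\<alpha>+(1-\<alpha>) * s) = (real (x+1) + real (m+1) * s)^(x+1) * (real (m+1))^(m+1)*(1-s)^(m+1) / N^((x+1)+(m+1))" for s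
    unfolding v_def aN N_def by (rule v_vals) auto
  have FFe: "FF x m \<alpha> = ((1-\<alpha>)*integral {0..\<alpha>} v - \<alpha>*integral {\<alpha>..1} v) / (real x + real m + 2)"
    unfolding \<alpha>_def v_def by (rule FF_M_expr)
  have NN: "real x + real m + 2 > 0" by simp
  show "x < m \<Longrightarrow> FF x m \<alpha> > 0"
  proof -
    assume xm: "x < m"
    have "1 * ((1-\<alpha>)*integral {0..\<alpha>} v - \<alpha>*integral {\<alpha>..1} v) > 0"
    proof (rule mono_split[OF a0 a1 cv])
      fix s :: real assume s: "0 < s" "s < 1"
      have "(real (m+1))^(m+1) * (1-s)^(m+1) * (real (x+1) + real (m+1) * s)^(x+1)
          < (real (x+1))^(x+1) * (1-s)^(x+1) * (real (m+1) + real (x+1) * s)^(m+1)"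
        by (rule key_ineq) (use xm s in auto)
      then have "v (\<alpha>+(1-\<alpha>) * s) < v (\<alpha>*(1-s))" unfolding vl vr using N
        by (simp add: divide_strict_right_mono mult_ac)
      then show "1 * (v (\<alpha>*(1-s)) - v (\<alpha>+(1-\<alpha>) * s)) > 0" by simp
    qed
    then show ?thesis unfolding FFe using NN by simp
  qed
  show "m < x \<Longrightarrow> FF x m \<alpha> < 0"
  proof -
    assume xm: "m < x"
    have "(-1) * ((1-\<alpha>)*integral {0..\<alpha>} v - \<alpha>*integral {\<alpha>..1} v) > 0"
    proof (rule mono_split[OF a0 a1 cv])
      fix s :: real assume s: "0 < s" "s < 1"
      have "(real (x+1))^(x+1) * (1-s)^(x+1) * (real (m+1) + real (x+1) * s)^(m+1)
          < (real (m+1))^(m+1) * (1-s)^(m+1) * (real (x+1) + real (m+1) * s)^(x+1)"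
        by (rule key_ineq) (use xm s in auto)
      then have "v (\<alpha>*(1-s)) < v (\<alpha>+(1-\<alpha>) * s)" unfolding vl vr using N
        by (simp add: divide_strict_right_mono mult_ac)
      then show "(-1) * (v (\<alpha>*(1-s)) - v (\<alpha>+(1-\<alpha>) * s)) > 0" by simp
    qed
    then show ?thesis unfolding FFe using NN by (simp add: divide_neg_pos)
  qed
qed


definition f1 :: "nat \<Rightarrow> nat \<Rightarrow> real \<Rightarrow> real" where "f1 x m = (\<lambda>p. p^(x+2)*(1-p)^m)"
definition f2 :: "nat \<Rightarrow> nat \<Rightarrow> real \<Rightarrow> real" where "f2 x m = (\<lambda>p. p^(x+1)*(1-p)^(m+1))"
definition f3 :: "nat \<Rightarrow> nat \<Rightarrow> real \<Rightarrow> real" where "f3 x m = (\<lambda>p. p^(x+1)*(1-p)^m)"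
definition f4 :: "nat \<Rightarrow> nat \<Rightarrow> real \<Rightarrow> real" where "f4 x m = (\<lambda>p. p^x*(1-p)^(m+1))"
definition TT :: "(real \<Rightarrow> real) \<Rightarrow> real \<Rightarrow> real" where "TT f u = integral {0..u} f"

definition GG :: "nat \<Rightarrow> nat \<Rightarrow> real \<Rightarrow> real" where
  "GG x m a = (1-a)*(TT (f1 x m) a - a*TT (f3 x m) a) + a*((TT (f2 x m) 1 - TT (f2 x m) a) - a*(TT (f4 x m) 1 - TT (f4 x m) a))"
definition GG1 :: "nat \<Rightarrow> nat \<Rightarrow> real \<Rightarrow> real" where
  "GG1 x m a = - TT (f1 x m) a - TT (f2 x m) a + (2*a-1)*TT (f3 x m) a + 2*a*TT (f4 x m) a + TT (f2 x m) 1 - 2*a*TT (f4 x m) 1"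
definition GG2 :: "nat \<Rightarrow> nat \<Rightarrow> real \<Rightarrow> real" where
  "GG2 x m a = 2*TT (f3 x m) a + 2*TT (f4 x m) a - 2*TT (f4 x m) 1"

lemma Tw: "continuous_on {0..1} f \<Longrightarrow> t \<in> {0..1} \<Longrightarrow>
  ((\<lambda>u. integral {0..u} f) has_real_derivative f t) (at t within {0..1})"
  by (rule integral_has_real_derivative)

lemma G_derivs:
  fixes x m :: nat
  assumes t: "t \<in> {0..1}"
  shows "(GG x m has_real_derivative GG1 x m t) (at t within {0..1})"
    and "(GG1 x m has_real_derivative GG2 x m t) (at t within {0..1})"
    and "(GG2 x m has_real_derivative 2*t^x*(1-t)^m) (at t within {0..1})"
proof -
  have c: "continuous_on {0..1} (f1 x m)" "continuous_on {0..1} (f2 x m)" "continuous_on {0..1} (f3 x m)" "continuous_on {0..1} (f4 x m)"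
    unfolding f1_def f2_def f3_def f4_def by (intro continuous_intros)+
  have d: "(TT (f1 x m) has_real_derivative f1 x m t) (at t within {0..1})" "(TT (f2 x m) has_real_derivative f2 x m t) (at t within {0..1})"
     "(TT (f3 x m) has_real_derivative f3 x m t) (at t within {0..1})" "(TT (f4 x m) has_real_derivative f4 x m t) (at t within {0..1})"
    unfolding TT_def[abs_def] using Tw[OF c(1) t] Tw[OF c(2) t] Tw[OF c(3) t] Tw[OF c(4) t] by auto
  have e1: "f1 x m t = t * f3 x m t" "f2 x m t = t * f4 x m t" "f2 x m t = (1-t) * f3 x m t" "f3 x m t + f4 x m t = t^x*(1-t)^m"
    unfolding f1_def f2_def f3_def f4_def by (simp_all add: algebra_simps)
  show "(GG x m has_real_derivative GG1 x m t) (at t within {0..1})"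
    unfolding GG_def[abs_def] GG1_def
    apply (rule derivative_eq_intros d DERIV_const refl)+
    using e1 by (simp add: algebra_simps)
  show "(GG1 x m has_real_derivative GG2 x m t) (at t within {0..1})"
    unfolding GG1_def[abs_def] GG2_def
    apply (rule derivative_eq_intros d DERIV_const refl)+
    using e1 by (simp add: algebra_simps)
  show "(GG2 x m has_real_derivative 2*t^x*(1-t)^m) (at t within {0..1})"
    unfolding GG2_def[abs_def]
    apply (rule derivative_eq_intros d DERIV_const refl)+
    using e1 by (simp add: algebra_simps)
qed
definition cc :: "nat \<Rightarrow> nat \<Rightarrow> nat \<Rightarrow> real" where
  "cc x m r = real ((x+m+3) choose (m-r)) * real ((x+r) choose r) * (-1)^r"

definition KK :: "nat \<Rightarrow> nat \<Rightarrow> real" where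
  "KK x m = fact m * fact x / fact (x+m+3)"

definition QQ :: "nat \<Rightarrow> nat \<Rightarrow> real \<Rightarrow> real" where
  "QQ x m a = KK x m * (2*(\<Sum>r=0..m. cc x m r * a^(x+r+3)) - real(m+1)*real(x+m+3)*a^2 + real(m+1)*real(x+1)*a)"
definition QQ1 :: "nat \<Rightarrow> nat \<Rightarrow> real \<Rightarrow> real" where
  "QQ1 x m a = KK x m * (2*(\<Sum>r=0..m. cc x m r * real(x+r+3) * a^(x+r+2)) - 2*(real(m+1)*real(x+m+3))*a + real(m+1)*real(x+1))"
definition QQ2 :: "nat \<Rightarrow> nat \<Rightarrow> real \<Rightarrow> real" where
  "QQ2 x m a = KK x m * (2*(\<Sum>r=0..m. cc x m r * real(x+r+3) * real(x+r+2) * a^(x+r+1)) - 2*(real(m+1)*real(x+m+3)))"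
definition QQ3 :: "nat \<Rightarrow> nat \<Rightarrow> real \<Rightarrow> real" where
  "QQ3 x m a = KK x m * (2*(\<Sum>r=0..m. cc x m r * real(x+r+3) * real(x+r+2) * real(x+r+1) * a^(x+r)))"

lemma QJ: "KK x m * a * J_poly (x+m) x a = QQ x m a"
proof -
  have "a * (2 * a ^ (x + 2) * (\<Sum>r = 0..m. real ((x+m + 3) choose (m - r)) * real ((x + r) choose r) * (-1) ^ r * a ^ r))
     = 2*(\<Sum>r=0..m. cc x m r * a^(x+r+3))"
    unfolding cc_def sum_distrib_left
    by (intro sum.cong refl) (simp add: power_add mult_ac power3_eq_cube)
  then show ?thesis unfolding J_poly_def QQ_def
    by (simp add: algebra_simps power2_eq_square)
qed

lemma QQ_d1: "(QQ x m has_real_derivative QQ1 x m a) (at a)"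
  unfolding QQ_def QQ1_def
  apply (rule derivative_eq_intros DERIV_sum refl)+
  apply (simp_all add: sum_distrib_left algebra_simps)
  done
lemma QQ_d2: "(QQ1 x m has_real_derivative QQ2 x m a) (at a)"
  unfolding QQ1_def QQ2_def
  apply (rule derivative_eq_intros DERIV_sum refl)+
  apply (simp_all add: sum_distrib_left algebra_simps)
  done

lemma QQ_d3: "(QQ2 x m has_real_derivative QQ3 x m a) (at a)"
  unfolding QQ2_def QQ3_def
  apply (rule derivative_eq_intros DERIV_sum refl)+
  apply (simp_all add: sum_distrib_left algebra_simps)
  done

lemma QQ_zero: "QQ x m 0 = 0" "QQ1 x m 0 = KK x m * (real(m+1)*real(x+1))"
  "QQ2 x m 0 = - KK x m * (2*(real(m+1)*real(x+m+3)))"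
  unfolding QQ_def QQ1_def QQ2_def by (simp_all add: power_0_left)

lemma coef_aux: fixes A B C D E F p1 p2 p3 s :: real
  assumes "B \<noteq> 0" "C \<noteq> 0" "D \<noteq> 0" "E \<noteq> 0" "F \<noteq> 0" "p1 \<noteq> 0" "p2 \<noteq> 0" "p3 \<noteq> 0"
  shows "A*B/C * ((((C/(D*(p3*p2*p1*E)) * (E/(F*B))) * s) * p3) * p2 * p1) = A/(F*D) * s"
  using assms by (simp add: field_simps)

lemma coef: assumes "r \<le> m"
  shows "KK x m * (cc x m r * real(x+r+3) * real(x+r+2) * real(x+r+1)) = real (m choose r) * (-1)^r"
proof -
  have b1: "real ((x+m+3) choose (m-r)) = fact (x+m+3) / (fact (m-r) * fact (x+r+3))"
  proof -
    have "x+m+3 - (m-r) = x+r+3" using assms by simp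
    then show ?thesis using binomial_fact[of "m-r" "x+m+3", where 'a=real] by simp
  qed
  have b2: "real ((x+r) choose r) = fact (x+r) / (fact r * fact x)"
    using binomial_fact[of r "x+r", where 'a=real] by simp
  have b3: "real (m choose r) = fact m / (fact r * fact (m-r))"
    using binomial_fact[of r m, where 'a=real] assms by simp
  have f3: "(fact (x+r+3) :: real) = real(x+r+3) * real(x+r+2) * real(x+r+1) * fact (x+r)"
  proof -
    have e: "x+r+3 = Suc (Suc (Suc (x+r)))" "x+r+2 = Suc (Suc (x+r))" "x+r+1 = Suc (x+r)" by simp_all
    show ?thesis unfolding e fact_Suc by (simp add: algebra_simps)
  qed
  show ?thesis unfolding KK_def cc_def b1 b2 b3 f3
    by (rule coef_aux) auto
qed

lemma QQ3_eq: "QQ3 x m a = 2 * a^x * (1-a)^m"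
proof -
  have "(1-a)^m = (\<Sum>r\<le>m. real (m choose r) * (-a)^r * 1^(m-r))"
    using binomial_ring[of "-a" 1 m] by simp
  also have "\<dots> = (\<Sum>r=0..m. real (m choose r) * (-1)^r * a^r)"
    by (simp add: atLeast0AtMost power_minus' mult.assoc)
  finally have bin: "(1-a)^m = (\<Sum>r=0..m. real (m choose r) * (-1)^r * a^r)" .
  have "QQ3 x m a = 2 * (\<Sum>r=0..m. KK x m * (cc x m r * real(x+r+3) * real(x+r+2) * real(x+r+1)) * a^(x+r))"
    unfolding QQ3_def sum_distrib_left by (intro sum.cong refl) (simp add: mult_ac)
  also have "\<dots> = 2 * (\<Sum>r=0..m. real (m choose r) * (-1)^r * a^(x+r))"
    by (intro arg_cong[where f="\<lambda>z. 2*z"] sum.cong refl) (simp only: coef atLeastAtMost_iff)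
  also have "\<dots> = 2 * a^x * (1-a)^m"
    unfolding bin sum_distrib_left by (simp add: power_add mult_ac)
  finally show ?thesis .
qed


lemma FF_GG:
  assumes t: "t \<in> {0..1}"
  shows "FF x m t = GG x m t"
proof -
  have comb: "integral {t..1} f = integral {0..1} f - integral {0..t} f" if "continuous_on {0..1} f" for f :: "real \<Rightarrow> real"
    using Henstock_Kurzweil_Integration.integral_combine[where a=0 and c=t and b=1 and f=f] t
      integrable_continuous_interval[OF that] by simp
  have c2: "continuous_on {0..1} (\<lambda>p::real. p^(x+1)*(1-p)^(m+1))" by (intro continuous_intros)
  have c4: "continuous_on {0..1} (\<lambda>p::real. p^x*(1-p)^(m+1))" by (intro continuous_intros)
  show ?thesis unfolding FF_def GG_def TT_def f1_def f2_def f3_def f4_def comb[OF c2] comb[OF c4] ..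
qed

lemma c4_aux: fixes fx fm F b c :: real assumes "F \<noteq> 0" "c \<noteq> 0"
  shows "fx*(b*fm)/F = fm*fx/(c*F)*(b*c)" using assms by (simp add: field_simps)

lemma C4_val: "TT (f4 x m) 1 = KK x m * (real(m+1)*real(x+m+3))"
proof -
  have "TT (f4 x m) 1 = fact x * fact (m+1) / fact (x + (m+1) + 1)"
    unfolding TT_def f4_def by (rule integral_unique[OF beta_nat])
  also have "\<dots> = KK x m * (real(m+1)*real(x+m+3))"
  proof -
    have e: "x + (m+1) + 1 = x+m+2" by simp
    have s3: "Suc (x+m+2) = x+m+3" by simp
    have g1: "(fact (x+m+3)::real) = real(x+m+3) * fact (x+m+2)" using fact_Suc[of "x+m+2", where 'a=real] unfolding s3 .
    have g2: "(fact (m+1)::real) = real(m+1) * fact m" using fact_Suc[of m] by simp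
    have p: "(fact (x+m+2)::real) > 0" "real(x+m+3) > 0" by simp_all
    show ?thesis unfolding KK_def e g1 g2 using p by (intro c4_aux) auto
  qed
  finally show ?thesis .
qed

lemma C2_val: "TT (f2 x m) 1 = KK x m * (real(m+1)*real(x+1))"
proof -
  have "TT (f2 x m) 1 = fact (x+1) * fact (m+1) / fact ((x+1) + (m+1) + 1)"
    unfolding TT_def f2_def by (rule integral_unique[OF beta_nat])
  also have "\<dots> = KK x m * (real(m+1)*real(x+1))"
  proof -
    have e: "(x+1) + (m+1) + 1 = x+m+3" by simp
    have g1: "(fact (x+1)::real) = real(x+1) * fact x" using fact_Suc[of x] by simp
    have g2: "(fact (m+1)::real) = real(m+1) * fact m" using fact_Suc[of m] by simp
    have p: "(fact (x+m+3)::real) > 0" by simp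
    show ?thesis unfolding KK_def e g1 g2 using p by (simp add: field_simps)
  qed
  finally show ?thesis .
qed

lemma TT0: "TT f 0 = 0" unfolding TT_def by simp

lemma const_on01:
  fixes E :: "real \<Rightarrow> real"
  assumes "\<And>a. a \<in> {0..1} \<Longrightarrow> (E has_real_derivative 0) (at a within {0..1})" "E 0 = 0" "t \<in> {0..1}"
  shows "E t = 0"
proof -
  obtain c where "\<forall>a\<in>{0..1}. E a = c"
    using has_field_derivative_zero_constant[of "{0..1::real}" E] assms(1) by auto
  then show ?thesis using assms(2,3) by force
qed

lemma FF_QQ:
  assumes t: "t \<in> {0..1}"
  shows "FF x m t = QQ x m t"
proof -
  have E2: "GG2 x m a - QQ2 x m a = 0" if a: "a \<in> {0..1}" for a
  proof (rule const_on01[OF _ _ a])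
    fix b :: real assume b: "b \<in> {0..1}"
    have "((\<lambda>a. GG2 x m a - QQ2 x m a) has_real_derivative 2*b^x*(1-b)^m - QQ3 x m b) (at b within {0..1})"
      by (intro DERIV_diff G_derivs(3)[OF b] has_field_derivative_at_within[OF QQ_d3])
    then show "((\<lambda>a. GG2 x m a - QQ2 x m a) has_real_derivative 0) (at b within {0..1})"
      by (simp add: QQ3_eq)
  next
    show "GG2 x m 0 - QQ2 x m 0 = 0" unfolding GG2_def QQ_zero TT0 C4_val by simp
  qed
  have E1: "GG1 x m a - QQ1 x m a = 0" if a: "a \<in> {0..1}" for a
  proof (rule const_on01[OF _ _ a])
    fix b :: real assume b: "b \<in> {0..1}"
    have "((\<lambda>a. GG1 x m a - QQ1 x m a) has_real_derivative GG2 x m b - QQ2 x m b) (at b within {0..1})"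
      by (intro DERIV_diff G_derivs(2)[OF b] has_field_derivative_at_within[OF QQ_d2])
    then show "((\<lambda>a. GG1 x m a - QQ1 x m a) has_real_derivative 0) (at b within {0..1})"
      using E2[OF b] by simp
  next
    show "GG1 x m 0 - QQ1 x m 0 = 0" unfolding GG1_def QQ_zero TT0 C2_val by simp
  qed
  have E0: "GG x m a - QQ x m a = 0" if a: "a \<in> {0..1}" for a
  proof (rule const_on01[OF _ _ a])
    fix b :: real assume b: "b \<in> {0..1}"
    have "((\<lambda>a. GG x m a - QQ x m a) has_real_derivative GG1 x m b - QQ1 x m b) (at b within {0..1})"
      by (intro DERIV_diff G_derivs(1)[OF b] has_field_derivative_at_within[OF QQ_d1])
    then show "((\<lambda>a. GG x m a - QQ x m a) has_real_derivative 0) (at b within {0..1})"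
      using E1[OF b] by simp
  next
    show "GG x m 0 - QQ x m 0 = 0" unfolding GG_def QQ_zero TT0 by simp
  qed
  show ?thesis using E0[OF t] FF_GG[OF t] by simp
qed

lemma KK_pos: "KK x m > 0" unfolding KK_def by simp

lemma FF_J: "t \<in> {0..1} \<Longrightarrow> FF x m t = KK x m * t * J_poly (x+m) x t"
  using FF_QQ QJ by simp


lemma zero_in:
  fixes J :: "real \<Rightarrow> real"
  assumes "a < b" "continuous_on {a..b} J" "J a > 0" "J b < 0"
  shows "\<exists>z. a < z \<and> z < b \<and> J z = 0"
proof -
  obtain z where z: "a \<le> z" "z \<le> b" "J z = 0"
    using IVT2'[of J b 0 a] assms by auto
  then have "z \<noteq> a" "z \<noteq> b" using assms by auto
  then show ?thesis using z by (intro exI[of _ z]) auto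
qed

theorem theorem3:
  fixes n x :: nat
  assumes "n \<ge> 1" and "x \<le> n"
    and "\<exists>!\<tau>. \<tau> \<in> {0<..<1} \<and> g_tri n x \<tau> = \<tau>"
  shows "(\<forall>a::real. (a \<in> {0<..<1} \<and> J_poly n x a = 0) \<longleftrightarrow> a = p_IB n x)
    \<and> (real x + 1) / (real n + 3) < p_IB n x \<and> p_IB n x < (real x + 2) / (real n + 3)
    \<and> (real x < real n / 2 \<longrightarrow>
         (real x + 1) / (real n + 2) < p_IB n x \<and> p_IB n x < (real x + 2) / (real n + 3))
    \<and> (real x > real n / 2 \<longrightarrow>
         (real x + 1) / (real n + 3) < p_IB n x \<and> p_IB n x < (real x + 1) / (real n + 2))"
proof -
  obtain m where nm: "n = x + m" using assms(2) le_iff_add by blast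
  have rn: "real n = real x + real m" using nm by simp
  define \<tau> where "\<tau> = p_IB n x"
  have gF: "g_tri n x \<alpha> = \<alpha> \<longleftrightarrow> FF x m \<alpha> = 0" if "\<alpha> \<in> {0<..<1}" for \<alpha>
    unfolding nm g_tri_def using g_iff[of \<alpha> x m] that by simp
  have \<tau>P: "\<tau> \<in> {0<..<1} \<and> g_tri n x \<tau> = \<tau>" unfolding \<tau>_def p_IB_def by (rule theI'[OF assms(3)])
  have uniq: "y = \<tau>" if "y \<in> {0<..<1}" "g_tri n x y = y" for y
    using assms(3) \<tau>P that by blast
  have FJ: "FF x m \<alpha> = KK x m * \<alpha> * J_poly n x \<alpha>" if "\<alpha> \<in> {0<..<1}" for \<alpha>
    unfolding nm using FF_J[of \<alpha> x m] that by simp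
  have FJ0: "J_poly n x \<alpha> = 0 \<longleftrightarrow> FF x m \<alpha> = 0" if "\<alpha> \<in> {0<..<1}" for \<alpha>
    using FJ[OF that] KK_pos[of x m] that by auto
  have Jpos: "J_poly n x \<alpha> > 0" if "\<alpha> \<in> {0<..<1}" "FF x m \<alpha> > 0" for \<alpha>
  proof -
    have "KK x m * \<alpha> > 0" using KK_pos[of x m] that(1) by simp
    moreover have "0 < (KK x m * \<alpha>) * J_poly n x \<alpha>" using FJ[OF that(1)] that(2) by simp
    ultimately show ?thesis using zero_less_mult_pos by blast
  qed
  have Jneg: "J_poly n x \<alpha> < 0" if "\<alpha> \<in> {0<..<1}" "FF x m \<alpha> < 0" for \<alpha>
  proof -
    have "KK x m * \<alpha> > 0" using KK_pos[of x m] that(1) by simp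
    note k = this
    have p: "(KK x m * \<alpha>) * J_poly n x \<alpha> < 0" using FJ[OF that(1)] that(2) by simp
    show ?thesis
    proof (rule ccontr)
      assume "\<not> J_poly n x \<alpha> < 0"
      then have "(KK x m * \<alpha>) * J_poly n x \<alpha> \<ge> 0" using k by simp
      then show False using p by simp
    qed
  qed
  have part1: "(a \<in> {0<..<1} \<and> J_poly n x a = 0) \<longleftrightarrow> a = \<tau>" for a
  proof
    assume "a \<in> {0<..<1} \<and> J_poly n x a = 0"
    then show "a = \<tau>" using FJ0 gF uniq by blast
  next
    assume "a = \<tau>"
    then show "a \<in> {0<..<1} \<and> J_poly n x a = 0" using \<tau>P FJ0 gF by blast
  qed
  have Jc: "continuous_on S (J_poly n x)" for S unfolding J_poly_def[abs_def] by (intro continuous_intros)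
  have between: "a < \<tau> \<and> \<tau> < b" if ab: "0 < a" "a < b" "b < 1" "FF x m a > 0" "FF x m b < 0" for a b
  proof -
    have "J_poly n x a > 0" using ab by (intro Jpos) auto
    moreover have "J_poly n x b < 0" using ab by (intro Jneg) auto
    ultimately obtain z where z: "a < z" "z < b" "J_poly n x z = 0"
      using zero_in[OF ab(2) Jc] by blast
    then have "z = \<tau>" using part1[of z] ab by auto
    then show ?thesis using z by simp
  qed
  define L1 where "L1 = (real x + 1) / (real x + real m + 3)"
  define U where "U = (real x + 2) / (real x + real m + 3)"
  define M where "M = (real x + 1) / (real x + real m + 2)"
  have L1p: "0 < L1" "L1 < U" "U < 1" unfolding L1_def U_def by (auto simp: divide_strict_right_mono field_simps)
  have Mp: "0 < M" "M < 1" "L1 < M" "M < U" unfolding L1_def U_def M_def by (auto simp: field_simps)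
  have FL1: "FF x m L1 > 0" unfolding L1_def by (rule FF_L1)
  have FU: "FF x m U < 0" unfolding U_def by (rule FF_U)
  have main: "L1 < \<tau> \<and> \<tau> < U" using between[OF L1p(1,2,3) FL1 FU] .
  have c1: "real x < real n / 2 \<longrightarrow> M < \<tau>"
  proof
    assume "real x < real n / 2"
    then have "x < m" using rn by simp
    then have "FF x m M > 0" unfolding M_def by (rule FF_M(1))
    then show "M < \<tau>" using between[OF Mp(1) Mp(4) L1p(3) _ FU] by blast
  qed
  have c2: "real x > real n / 2 \<longrightarrow> \<tau> < M"
  proof
    assume "real x > real n / 2"
    then have "m < x" using rn by simp
    then have "FF x m M < 0" unfolding M_def by (rule FF_M(2))
    then show "\<tau> < M" using between[OF L1p(1) Mp(3) Mp(2) FL1] by blast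
  qed
  show ?thesis
    using part1 main c1 c2 unfolding \<tau>_def[symmetric] L1_def U_def M_def rn
    by (simp add: add_ac)
qed

end
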